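(* $|(DF)_{(y,\theta)}v|\ge4|v|$ for all $(y,\theta)\in Y$ (at which $F$ is differentiable) and all $v\in\mathbb{R}^2$.
   Context: Let $\mathbb{T}=\mathbb{R}/\mathbb{Z}$, $M=[0,1]\times\mathbb{T}$. Fix $\gamma>0$. Let $u:[0,\tfrac34]\times\mathbb{T}\to(0,\infty)$ be $C^2$ with $u(0,\theta)=c_0>0$. Define $f(x,\theta)=(f_1(x,\theta),4\theta\bmod1)$, $f_1(x,\theta)=x(1+x^\gamma u(x,\theta))$ for $0\le x\le\tfrac34$, $f_1=4x-3$ for $\tfrac34<x\le1$. Standing assumptions: $x(1+x^\gamma u)\le1$ on $[0,\tfrac34]\times\mathbb{T}$; $|(Df)_{(x,\theta)}v|\ge|v|$ on $[0,\tfrac34]\times\mathbb{T}$; $f_1(\tfrac34,\theta)>\tfrac{15}{16}$; $\sup|x\,\partial u/\partial x|$, $\sup|\partial u/\partial\theta|$ sufficiently small. Let $X_i=\{(x,\theta):0\le x\le f_1(\tfrac34,\tfrac{i+\theta}{4})\}$, $i=0,\dots,3$, $X=\bigcup_iX_i$, $Y=([\tfrac34,1]\times\mathbb{T})\cap X$, $\varphi:Y\to\mathbb{Z}^+$ the first return time of $f$ to $Y$ and $F=f^\varphi:Y\to Y$ the first return map. *)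

theory Defs
  imports "HOL-Analysis.Analysis"
begin

text \<open>We work on the universal cover: a point of M = [0,1] x T is represented by
  (x, theta) with theta real; functions on T are 1-periodic in theta.  The lift of
  theta -> 4 theta mod 1 is theta -> 4 theta.\<close>

definition f1 :: "real \<Rightarrow> (real \<times> real \<Rightarrow> real) \<Rightarrow> real \<Rightarrow> real \<Rightarrow> real" where
  "f1 \<gamma> u x \<theta> = (if x \<le> 3/4 then x * (1 + x powr \<gamma> * u (x, \<theta>)) else 4 * x - 3)"

definition fmap :: "real \<Rightarrow> (real \<times> real \<Rightarrow> real) \<Rightarrow> real \<times> real \<Rightarrow> real \<times> real" where
  "fmap \<gamma> u p = (f1 \<gamma> u (fst p) (snd p), 4 * snd p)"

definition gbranch :: "real \<Rightarrow> (real \<times> real \<Rightarrow> real) \<Rightarrow> real \<times> real \<Rightarrow> real \<times> real" where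
  "gbranch \<gamma> u p = (fst p * (1 + fst p powr \<gamma> * u p), 4 * snd p)"

definition Xset :: "real \<Rightarrow> (real \<times> real \<Rightarrow> real) \<Rightarrow> (real \<times> real) set" where
  "Xset \<gamma> u = {(x, \<theta>). 0 \<le> x \<and> (\<exists>i::nat\<in>{0..3}. x \<le> f1 \<gamma> u (3/4) ((real i + \<theta>) / 4))}"

definition Yset :: "real \<Rightarrow> (real \<times> real \<Rightarrow> real) \<Rightarrow> (real \<times> real) set" where
  "Yset \<gamma> u = ({3/4..1} \<times> UNIV) \<inter> Xset \<gamma> u"

definition ret_time :: "real \<Rightarrow> (real \<times> real \<Rightarrow> real) \<Rightarrow> real \<times> real \<Rightarrow> nat" where
  "ret_time \<gamma> u p = (LEAST n. 0 < n \<and> (fmap \<gamma> u ^^ n) p \<in> Yset \<gamma> u)"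

definition Fmap :: "real \<Rightarrow> (real \<times> real \<Rightarrow> real) \<Rightarrow> real \<times> real \<Rightarrow> real \<times> real" where
  "Fmap \<gamma> u p = (fmap \<gamma> u ^^ ret_time \<gamma> u p) p"

definition standing :: "real \<Rightarrow> real \<Rightarrow> (real \<times> real \<Rightarrow> real) \<Rightarrow> bool" where
  "standing \<gamma> \<epsilon> u \<longleftrightarrow>
     (let S = {0..3/4} \<times> (UNIV :: real set) in
      (\<forall>x \<theta>. u (x, \<theta> + 1) = u (x, \<theta>)) \<and>
      (\<forall>p\<in>S. 0 < u p) \<and>
      (\<exists>c0 > 0. \<forall>\<theta>. u (0, \<theta>) = c0) \<and>
      (\<exists>(u' :: real \<times> real \<Rightarrow> ((real \<times> real) \<Rightarrow>\<^sub>L real))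
         (u'' :: real \<times> real \<Rightarrow> ((real \<times> real) \<Rightarrow>\<^sub>L ((real \<times> real) \<Rightarrow>\<^sub>L real))).
         (\<forall>p\<in>S. (u has_derivative blinfun_apply (u' p)) (at p within S)) \<and>
         (\<forall>p\<in>S. (u' has_derivative blinfun_apply (u'' p)) (at p within S)) \<and>
         continuous_on S u'' \<and>
         (\<forall>p\<in>S. \<bar>fst p * blinfun_apply (u' p) (1, 0)\<bar> \<le> \<epsilon>) \<and>
         (\<forall>p\<in>S. \<bar>blinfun_apply (u' p) (0, 1)\<bar> \<le> \<epsilon>)) \<and>
      (\<forall>p\<in>S. fst p * (1 + fst p powr \<gamma> * u p) \<le> 1) \<and>
      (\<forall>p\<in>S. \<forall>D. (gbranch \<gamma> u has_derivative D) (at p within S) \<longrightarrow>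
                 (\<forall>v. norm v \<le> norm (D v))) \<and>
      (\<forall>\<theta>. f1 \<gamma> u (3/4) \<theta> > 15/16))"

end

theory Submission imports Defs begin

definition tri :: "real \<Rightarrow> real \<Rightarrow> real \<Rightarrow> real \<times> real \<Rightarrow> real \<times> real" where
  "tri a b k v = (a * fst v + b * snd v, k * snd v)"

definition SS :: "(real \<times> real) set" where "SS = {0..3/4} \<times> (UNIV :: real set)"

lemma st_period: "standing g e u \<Longrightarrow> u (x, t + 1) = u (x, t)"
  unfolding standing_def Let_def by blast

lemma st_pos: "standing g e u \<Longrightarrow> 0 \<le> x \<Longrightarrow> x \<le> 3/4 \<Longrightarrow> 0 < u (x, t)"
  unfolding standing_def Let_def by auto

lemma st_le1: "standing g e u \<Longrightarrow> 0 \<le> x \<Longrightarrow> x \<le> 3/4 \<Longrightarrow> x * (1 + x powr g * u (x, t)) \<le> 1"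
  unfolding standing_def Let_def by auto

lemma st_15: "standing g e u \<Longrightarrow> f1 g u (3/4) t > 15/16"
  unfolding standing_def Let_def by auto

lemma st_exp: "standing g e u \<Longrightarrow> p \<in> SS \<Longrightarrow> (gbranch g u has_derivative D) (at p within SS) \<Longrightarrow> norm v \<le> norm (D v)"
  unfolding standing_def Let_def SS_def by blast

lemma st_deriv: "standing g e u \<Longrightarrow> \<exists>u'. (\<forall>p\<in>SS. (u has_derivative blinfun_apply (u' p)) (at p within SS)) \<and>
   (\<forall>p\<in>SS. \<bar>fst p * blinfun_apply (u' p) (1, 0)\<bar> \<le> e) \<and> (\<forall>p\<in>SS. \<bar>blinfun_apply (u' p) (0, 1)\<bar> \<le> e)"
  unfolding standing_def Let_def SS_def by blast

lemma st_cont: "standing g e u \<Longrightarrow> continuous_on SS u"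
proof -
  assume "standing g e u"
  from st_deriv[OF this] obtain u' where "\<forall>p\<in>SS. (u has_derivative blinfun_apply (u' p)) (at p within SS)" by blast
  then show ?thesis unfolding continuous_on_eq_continuous_within
    using has_derivative_continuous by blast
qed

lemma f1_34: "f1 g u (3/4) t = 3/4 * (1 + (3/4) powr g * u (3/4, t))"
  unfolding f1_def by simp

lemma memY: "q \<in> Yset g u \<longleftrightarrow> 3/4 \<le> fst q \<and> fst q \<le> 1 \<and> (\<exists>i::nat\<in>{0..3}. fst q \<le> f1 g u (3/4) ((real i + snd q) / 4))"
  unfolding Yset_def Xset_def by (cases q) auto

lemma fmap_hi: "fst z > 3/4 \<Longrightarrow> fmap g u z = (4 * fst z - 3, 4 * snd z)"
  unfolding fmap_def f1_def by auto

lemma fmap_lo: "fst z \<le> 3/4 \<Longrightarrow> fmap g u z = gbranch g u z"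
  unfolding fmap_def f1_def gbranch_def by auto

lemma f1_le1: "standing g e u \<Longrightarrow> f1 g u (3/4) t \<le> 1"
  using st_le1[of g e u "3/4" t] unfolding f1_34 by simp

lemma Y_34: "standing g e u \<Longrightarrow> fst q = 3/4 \<Longrightarrow> q \<in> Yset g u"
  unfolding memY using st_15[of g e u "(real 0 + snd q)/4"] by force

lemma inv_hi: "standing g e u \<Longrightarrow> fst z > 3/4 \<Longrightarrow> z \<notin> Yset g u \<Longrightarrow> fst (fmap g u z) > 3/4"
proof -
  assume st: "standing g e u" and z: "fst z > 3/4" "z \<notin> Yset g u"
  have "fst z > 15/16"
  proof (rule ccontr)
    assume a: "\<not> fst z > 15/16"
    have "15/16 < f1 g u (3/4) ((real 0 + snd z)/4)" by (rule st_15[OF st])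
    then have b: "fst z \<le> f1 g u (3/4) ((real 0 + snd z)/4)" using a by linarith
    have "z \<in> Yset g u" unfolding memY
    proof (intro conjI bexI[of _ 0])
      show "3/4 \<le> fst z" using z by linarith
      show "fst z \<le> 1" using a by linarith
    qed (use b in auto)
    with z show False by simp
  qed
  then show ?thesis using fmap_hi[OF z(1)] by simp
qed

lemma pos_step: "standing g e u \<Longrightarrow> fst z > 0 \<Longrightarrow> fst (fmap g u z) > 0"
proof -
  assume st: "standing g e u" and z: "fst z > 0"
  show ?thesis
  proof (cases "fst z \<le> 3/4")
    case True
    have "0 < u z" using st_pos[OF st, of "fst z" "snd z"] True z by (cases z) auto
    then have "0 < fst z * (1 + fst z powr g * u (fst z, snd z))" using z by (simp add: add_pos_nonneg)
    then show ?thesis using True unfolding fmap_def f1_def by (cases z) simp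
  next
    case False then show ?thesis using fmap_hi[of z] by simp
  qed
qed

lemma blin2: "blinfun_apply (L :: (real \<times> real) \<Rightarrow>\<^sub>L real) (a, b) = a * blinfun_apply L (1, 0) + b * blinfun_apply L (0, 1)"
proof -
  have e: "(a, b) = a *\<^sub>R (1, 0) + b *\<^sub>R ((0, 1) :: real \<times> real)" by simp
  show ?thesis by (subst e) (simp only: blinfun.add_right blinfun.scaleR_right real_scaleR_def)
qed

lemma gb_deriv:
  assumes st: "standing g 1 u" and g: "g > 0" and z: "0 < fst z" "fst z < 3/4"
  shows "\<exists>a b. a > 0 \<and> (gbranch g u has_derivative tri a b 4) (at z) \<and> (\<forall>v. norm v \<le> norm (tri a b 4 v))"
proof -
  obtain u' where ud: "\<forall>p\<in>SS. (u has_derivative blinfun_apply (u' p)) (at p within SS)"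
    and ux: "\<forall>p\<in>SS. \<bar>fst p * blinfun_apply (u' p) (1, 0)\<bar> \<le> 1"
    using st_deriv[OF st] by blast
  define Op where "Op = {q::real\<times>real. 0 < fst q \<and> fst q < 3/4}"
  have oOp: "open Op" unfolding Op_def by (intro open_Collect_conj open_Collect_less continuous_intros)
  have zOp: "z \<in> Op" using z unfolding Op_def by simp
  have OpS: "Op \<subseteq> SS" unfolding Op_def SS_def by auto
  have zS: "z \<in> SS" using zOp OpS by auto
  have "(u has_derivative blinfun_apply (u' z)) (at z within Op)"
    using has_derivative_subset[OF ud[rule_format, OF zS] OpS] .
  then have uat: "(u has_derivative blinfun_apply (u' z)) (at z)"
    using at_within_open[OF zOp oOp] by simp
  define x where "x = fst z"
  define a where "a = 1 + (1 + g) * x powr g * u z + x powr g * (x * blinfun_apply (u' z) (1, 0))"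
  define b where "b = x * x powr g * blinfun_apply (u' z) (0, 1)"
  have D: "(gbranch g u has_derivative (\<lambda>h. (fst h * (1 + fst z powr g * u z) + fst z * (fst z powr g * (0 * ln (fst z) + fst h * g / fst z) * u z + fst z powr g * blinfun_apply (u' z) h), 4 * snd h))) (at z)"
    unfolding gbranch_def
    using z by (auto intro!: derivative_eq_intros uat)
  have E: "(\<lambda>h. (fst h * (1 + fst z powr g * u z) + fst z * (fst z powr g * (0 * ln (fst z) + fst h * g / fst z) * u z + fst z powr g * blinfun_apply (u' z) h), 4 * snd h)) = tri a b 4"
  proof
    fix h :: "real \<times> real"
    obtain h1 h2 where h: "h = (h1, h2)" by (cases h)
    have xp: "x > 0" using z x_def by simp
    show "(fst h * (1 + fst z powr g * u z) + fst z * (fst z powr g * (0 * ln (fst z) + fst h * g / fst z) * u z + fst z powr g * blinfun_apply (u' z) h), 4 * snd h) = tri a b 4 h"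
      unfolding h tri_def a_def b_def x_def[symmetric] using xp
      by (simp add: blin2[of "u' z" h1 h2] field_simps)
  qed
  have Dg: "(gbranch g u has_derivative tri a b 4) (at z)" using D unfolding E .
  have "x powr g < 1" using z g x_def powr_less_mono2[of g x 1] by simp
  moreover have "x powr g \<ge> 0" by simp
  moreover have "u z > 0" using st_pos[OF st, of "fst z" "snd z"] z by (cases z) auto
  moreover have "\<bar>x * blinfun_apply (u' z) (1, 0)\<bar> \<le> 1" using ux zS x_def by auto
  ultimately have "a > 0" unfolding a_def
  proof -
    assume A: "x powr g < 1" "0 \<le> x powr g" "0 < u z" "\<bar>x * blinfun_apply (u' z) (1, 0)\<bar> \<le> 1"
    have "x powr g * (x * blinfun_apply (u' z) (1, 0)) \<ge> - (x powr g)"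
    proof -
      have "x * blinfun_apply (u' z) (1, 0) \<ge> -1" using A(4) by linarith
      from mult_left_mono[OF this A(2)] show ?thesis by simp
    qed
    moreover have "(1 + g) * x powr g * u z \<ge> 0" using A g by simp
    ultimately show "1 + (1 + g) * x powr g * u z + x powr g * (x * blinfun_apply (u' z) (1, 0)) > 0"
      using A(1) by linarith
  qed
  moreover have "\<forall>v. norm v \<le> norm (tri a b 4 v)"
    using st_exp[OF st zS has_derivative_at_withinI[OF Dg]] by blast
  ultimately show ?thesis using Dg by blast
qed

lemma tri_4: "tri 4 0 4 = (\<lambda>v. (4::real) *\<^sub>R v)"
  unfolding tri_def by (auto simp: fun_eq_iff)

lemma oH: "open {q::real\<times>real. 3/4 < fst q}"
  by (rule open_Collect_less) (intro continuous_intros)+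

lemma oL: "open {q::real\<times>real. fst q < 3/4}"
  by (rule open_Collect_less) (intro continuous_intros)+

lemma f_deriv_hi: "fst z > 3/4 \<Longrightarrow> (fmap g u has_derivative tri 4 0 4) (at z)"
proof -
  assume True: "fst z > 3/4"
  have d: "((\<lambda>q. (4 * fst q - 3, 4 * snd q)) has_derivative tri 4 0 4) (at z)"
    unfolding tri_def by (auto intro!: derivative_eq_intros)
  show "(fmap g u has_derivative tri 4 0 4) (at z)"
    by (rule has_derivative_transform_within_open[OF d, of "{q. 3/4 < fst q}"])
       (use True oH in \<open>auto simp: fmap_hi\<close>)
qed

lemma f_deriv:
  assumes st: "standing g 1 u" and g: "g > 0" and z: "0 < fst z" "fst z \<noteq> 3/4"
  shows "\<exists>a b. a > 0 \<and> (fmap g u has_derivative tri a b 4) (at z) \<and> (\<forall>v. norm v \<le> norm (tri a b 4 v))"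
proof (cases "fst z > 3/4")
  case True
  have "(fmap g u has_derivative tri 4 0 4) (at z)" using f_deriv_hi True by blast
  moreover have "\<forall>v. norm v \<le> norm (tri 4 0 4 v)" unfolding tri_4 by simp
  moreover have "(4::real) > 0" by simp
  ultimately show ?thesis by blast
next
  case False
  then have z2: "fst z < 3/4" using z by auto
  obtain a b where ab: "a > 0" "(gbranch g u has_derivative tri a b 4) (at z)" "\<forall>v. norm v \<le> norm (tri a b 4 v)"
    using gb_deriv[OF st g z(1) z2] by blast
  have "(fmap g u has_derivative tri a b 4) (at z)"
    by (rule has_derivative_transform_within_open[OF ab(2), of "{q. fst q < 3/4}"])
       (use z2 oL in \<open>auto simp: fmap_lo\<close>)
  then show ?thesis using ab by blast
qed

lemma pos_iter: "standing g e u \<Longrightarrow> fst p > 0 \<Longrightarrow> fst ((fmap g u ^^ k) p) > 0"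
  by (induction k) (auto intro: pos_step)

lemma tri_comp: "tri a b 4 \<circ> tri c d (4 ^ k) = tri (a * c) (a * d + b * 4 ^ k) (4 ^ Suc k)"
  unfolding tri_def by (auto simp: fun_eq_iff algebra_simps)

lemma iter_deriv:
  assumes st: "standing g 1 u" and g: "g > 0" and p: "fst p > 3/4"
    and nY: "\<And>k. 0 < k \<Longrightarrow> k < m \<Longrightarrow> (fmap g u ^^ k) p \<notin> Yset g u"
  shows "1 \<le> k \<Longrightarrow> k \<le> m \<Longrightarrow> \<exists>al be. al > 0 \<and> ((fmap g u ^^ k) has_derivative tri al be (4 ^ k)) (at p) \<and> (\<forall>v. 4 * norm v \<le> norm (tri al be (4 ^ k) v))"
proof (induction k)
  case 0 then show ?case by simp
next
  case (Suc k)
  show ?case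
  proof (cases "k = 0")
    case True
    have "(fmap g u has_derivative tri 4 0 4) (at p)" using f_deriv_hi p by blast
    moreover have e1: "fmap g u ^^ Suc k = fmap g u" using True by simp
    moreover have e2: "(4::real) ^ Suc k = 4" using True by simp
    ultimately have D1: "((fmap g u ^^ Suc k) has_derivative tri 4 0 (4 ^ Suc k)) (at p)" by (simp only: e1 e2)
    have N1: "\<forall>v. 4 * norm v \<le> norm (tri 4 0 (4 ^ Suc k) v)" using True tri_4 by simp
    show ?thesis
      apply (rule exI[where x="4"])
      apply (rule exI[where x="0"])
      apply (intro conjI)
      apply simp
      apply (rule D1)
      by (rule N1)
  next
    case False
    have k1: "1 \<le> k" using False by simp
    have k2: "k \<le> m" using Suc.prems by simp
    obtain al be where IH: "al > 0" "((fmap g u ^^ k) has_derivative tri al be (4 ^ k)) (at p)" "\<forall>v. 4 * norm v \<le> norm (tri al be (4 ^ k) v)"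
      using Suc.IH[OF k1 k2] by blast
    define z where "z = (fmap g u ^^ k) p"
    have zpos: "fst z > 0" unfolding z_def using pos_iter[OF st] p by simp
    have zY: "z \<notin> Yset g u" unfolding z_def using nY[of k] False Suc.prems by simp
    have z34: "fst z \<noteq> 3/4" using Y_34[OF st] zY by blast
    obtain a b where ab: "a > 0" "(fmap g u has_derivative tri a b 4) (at z)" "\<forall>v. norm v \<le> norm (tri a b 4 v)"
      using f_deriv[OF st g zpos z34] by blast
    have "((\<lambda>x. fmap g u ((fmap g u ^^ k) x)) has_derivative (\<lambda>x. tri a b 4 (tri al be (4 ^ k) x))) (at p)"
      by (rule has_derivative_compose[OF IH(2)]) (use ab(2) z_def in simp)
    moreover have "(\<lambda>x. fmap g u ((fmap g u ^^ k) x)) = (fmap g u ^^ Suc k)" by (simp add: fun_eq_iff)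
    moreover have "(\<lambda>x. tri a b 4 (tri al be (4 ^ k) x)) = tri (a * al) (a * be + b * 4 ^ k) (4 ^ Suc k)"
      using tri_comp[of a b al be k] by (simp add: comp_def)
    ultimately have D: "((fmap g u ^^ Suc k) has_derivative tri (a * al) (a * be + b * 4 ^ k) (4 ^ Suc k)) (at p)" by simp
    have "\<forall>v. 4 * norm v \<le> norm (tri (a * al) (a * be + b * 4 ^ k) (4 ^ Suc k) v)"
    proof
      fix v
      have "4 * norm v \<le> norm (tri al be (4 ^ k) v)" using IH(3) by blast
      also have "\<dots> \<le> norm (tri a b 4 (tri al be (4 ^ k) v))" using ab(3) by blast
      also have "tri a b 4 (tri al be (4 ^ k) v) = tri (a * al) (a * be + b * 4 ^ k) (4 ^ Suc k) v"
        using tri_comp[of a b al be k] by (metis comp_apply)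
      finally show "4 * norm v \<le> norm (tri (a * al) (a * be + b * 4 ^ k) (4 ^ Suc k) v)" .
    qed
    note N = this
    have P: "a * al > 0" using ab(1) IH(1) by simp
    show ?thesis
      apply (rule exI[where x="a * al"])
      apply (rule exI[where x="a * be + b * 4 ^ k"])
      using P D N by (intro conjI)
  qed
qed

lemma u_line_deriv:
  assumes that: "\<forall>p\<in>SS. (u has_derivative blinfun_apply (u' p)) (at p within SS)"
  shows "((\<lambda>t. u (3/4, t)) has_real_derivative blinfun_apply (u' (3/4, t)) (0, 1)) (at t)"
proof -
  have d1: "((\<lambda>t. (3/4::real, t)) has_derivative (\<lambda>y. (0, y))) (at t within UNIV)"
    by (rule has_derivative_Pair[OF has_derivative_const has_derivative_ident])
  have im: "(\<lambda>t. (3/4::real, t)) ` UNIV \<subseteq> SS" by (auto simp: SS_def)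
  have "((\<lambda>t. u (3/4, t)) has_derivative (\<lambda>y. blinfun_apply (u' (3/4, t)) (0, y))) (at t within UNIV)"
    using has_derivative_in_compose2[of SS u "\<lambda>p. blinfun_apply (u' p)", OF _ im _ d1] that by simp
  moreover have "(\<lambda>y. blinfun_apply (u' (3/4, t)) (0, y)) = (\<lambda>y. blinfun_apply (u' (3/4, t)) (0, 1) * y)"
  proof
    fix y show "blinfun_apply (u' (3/4, t)) (0, y) = blinfun_apply (u' (3/4, t)) (0, 1) * y"
      using blin2[of "u' (3/4, t)" 0 y] by simp
  qed
  ultimately show ?thesis unfolding has_field_derivative_def by simp
qed

lemma g_lip:
  assumes st: "standing g 1 u" and g: "g > 0"
  shows "\<bar>f1 g u (3/4) s - f1 g u (3/4) t\<bar> \<le> \<bar>s - t\<bar>"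
proof -
  obtain u' where ud: "\<forall>p\<in>SS. (u has_derivative blinfun_apply (u' p)) (at p within SS)"
    and ut: "\<forall>p\<in>SS. \<bar>blinfun_apply (u' p) (0, 1)\<bar> \<le> 1"
    using st_deriv[OF st] by blast
  have lip: "\<bar>u (3/4, b) - u (3/4, a)\<bar> \<le> \<bar>b - a\<bar>" if ab: "a < b" for a b
  proof -
    obtain z where "a < z" "z < b" "u (3/4, b) - u (3/4, a) = (b - a) * blinfun_apply (u' (3/4, z)) (0, 1)"
      using MVT2[OF ab, of "\<lambda>t. u (3/4, t)" "\<lambda>t. blinfun_apply (u' (3/4, t)) (0, 1)"]
        u_line_deriv[OF ud] by blast
    moreover have "\<bar>blinfun_apply (u' (3/4, z)) (0, 1)\<bar> \<le> 1" using ut by (auto simp: SS_def)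
    ultimately show ?thesis using ab by (simp add: abs_mult mult_le_cancel_left1)
  qed
  have lu: "\<bar>u (3/4, s) - u (3/4, t)\<bar> \<le> \<bar>s - t\<bar>"
  proof (cases s t rule: linorder_cases)
    case less then show ?thesis using lip[of s t] by (simp add: abs_minus_commute)
  next
    case greater then show ?thesis using lip[of t s] by simp
  qed simp
  have c: "(3/4::real) powr g \<le> 1" using g by (simp add: powr_le1)
  have "f1 g u (3/4) s - f1 g u (3/4) t = 3/4 * (3/4) powr g * (u (3/4, s) - u (3/4, t))"
    unfolding f1_34 by (simp add: algebra_simps)
  then have "\<bar>f1 g u (3/4) s - f1 g u (3/4) t\<bar> = \<bar>3/4 * (3/4) powr g * (u (3/4, s) - u (3/4, t))\<bar>"
    by (rule arg_cong)
  also have "\<dots> = 3/4 * (3/4) powr g * \<bar>u (3/4, s) - u (3/4, t)\<bar>"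
    by (simp add: abs_mult)
  also have "\<dots> \<le> 1 * 1 * \<bar>s - t\<bar>"
    by (intro mult_mono c lu) auto
  finally show ?thesis by simp
qed


lemma g_cont: assumes st: "standing g 1 u" and g: "g > 0" shows "isCont (f1 g u (3/4)) t"
proof -
  have "\<forall>r>0. \<exists>s>0. \<forall>x. x \<noteq> t \<and> norm (x - t) < s \<longrightarrow> norm (f1 g u (3/4) x - f1 g u (3/4) t) < r"
  proof (intro allI impI)
    fix r :: real assume r: "0 < r"
    have "\<forall>x. x \<noteq> t \<and> norm (x - t) < r \<longrightarrow> norm (f1 g u (3/4) x - f1 g u (3/4) t) < r"
    proof (intro allI impI)
      fix x assume "x \<noteq> t \<and> norm (x - t) < r"
      then show "norm (f1 g u (3/4) x - f1 g u (3/4) t) < r"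
        using g_lip[OF st g, of x t] by simp
    qed
    then show "\<exists>s>0. \<forall>x. x \<noteq> t \<and> norm (x - t) < s \<longrightarrow> norm (f1 g u (3/4) x - f1 g u (3/4) t) < r"
      using r by blast
  qed
  then show ?thesis unfolding isCont_def LIM_eq by blast
qed

lemma qlim: "(X has_real_derivative c) (at 0) \<Longrightarrow> ((\<lambda>t. (X t - X 0) / t) \<longlongrightarrow> c) (at_right 0)"
proof -
  assume "(X has_real_derivative c) (at 0)"
  then have "((\<lambda>y. (X y - X 0) / (y - 0)) \<longlongrightarrow> c) (at 0)" using has_field_derivative_iff by blast
  then show ?thesis by (auto intro: tendsto_mono[OF at_le])
qed

lemma clim: "(X has_real_derivative c) (at 0) \<Longrightarrow> (X \<longlongrightarrow> X 0) (at_right 0)"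
proof -
  assume "(X has_real_derivative c) (at 0)"
  then have "isCont X 0" by (rule DERIV_isCont)
  then have "(X \<longlongrightarrow> X 0) (at 0)" by (simp add: isCont_def)
  then show ?thesis by (auto intro: tendsto_mono[OF at_le])
qed

lemma inY_ev:
  assumes st: "standing g 1 u" and g: "g > 0" and zY: "z \<in> Yset g u"
    and X: "(X has_real_derivative c1) (at 0)" and T: "(T has_real_derivative c2) (at 0)"
    and X0: "X 0 = fst z" and T0: "T 0 = snd z"
    and c: "fst z > 3/4 \<or> c1 > 0" and d: "fst z \<le> 15/16 \<or> c1 + \<bar>c2\<bar> < 0"
  shows "eventually (\<lambda>t. (X t, T t) \<in> Yset g u) (at_right 0)"
proof -
  have qX: "((\<lambda>t. (X t - X 0) / t) \<longlongrightarrow> c1) (at_right 0)" by (rule qlim[OF X])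
  have qT: "((\<lambda>t. (T t - T 0) / t) \<longlongrightarrow> c2) (at_right 0)" by (rule qlim[OF T])
  have cX: "(X \<longlongrightarrow> X 0) (at_right 0)" by (rule clim[OF X])
  have cT: "(T \<longlongrightarrow> T 0) (at_right 0)" by (rule clim[OF T])
  have tpos: "eventually (\<lambda>t::real. 0 < t) (at_right 0)" by (rule eventually_at_right_less)
  have z34: "3/4 \<le> fst z" using zY unfolding memY by simp
  have E1: "eventually (\<lambda>t. 3/4 \<le> X t) (at_right 0)"
    using c
  proof
    assume "fst z > 3/4"
    then have "3/4 < X 0" using X0 by simp
    then have "eventually (\<lambda>t. 3/4 < X t) (at_right 0)" by (rule order_tendstoD(1)[OF cX])
    then show ?thesis by eventually_elim simp
  next
    assume "c1 > 0"
    then have "eventually (\<lambda>t. 0 < (X t - X 0) / t) (at_right 0)" using order_tendstoD(1)[OF qX] by simp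
    then show ?thesis using tpos
    proof eventually_elim
      case (elim t)
      then have "X t - X 0 > 0" by (simp add: zero_less_divide_iff)
      then show ?case using X0 z34 by simp
    qed
  qed
  have E2: "eventually (\<lambda>t. \<exists>i::nat\<in>{0..3}. X t \<le> f1 g u (3/4) ((real i + T t) / 4)) (at_right 0)"
    using d
  proof
    assume z15: "fst z \<le> 15/16"
    have "((\<lambda>t. (real 0 + T t) / 4) \<longlongrightarrow> (real 0 + T 0) / 4) (at_right 0)"
      by (intro tendsto_intros cT) simp
    then have "((\<lambda>t. f1 g u (3/4) ((real 0 + T t) / 4)) \<longlongrightarrow> f1 g u (3/4) ((real 0 + T 0) / 4)) (at_right 0)"
      by (rule isCont_tendsto_compose[OF g_cont[OF st g]])
    then have "((\<lambda>t. X t - f1 g u (3/4) ((real 0 + T t) / 4)) \<longlongrightarrow> X 0 - f1 g u (3/4) ((real 0 + T 0) / 4)) (at_right 0)"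
      by (intro tendsto_intros cX)
    moreover have "X 0 - f1 g u (3/4) ((real 0 + T 0) / 4) < 0" using st_15[OF st, of "(real 0 + T 0) / 4"] z15 X0 by simp
    ultimately have "eventually (\<lambda>t. X t - f1 g u (3/4) ((real 0 + T t) / 4) < 0) (at_right 0)"
      by (rule order_tendstoD(2))
    then show ?thesis
    proof eventually_elim
      case (elim t)
      have "X t \<le> f1 g u (3/4) ((real 0 + T t) / 4)" using elim by simp
      moreover have "(0::nat) \<in> {0..3}" by simp
      ultimately show ?case by blast
    qed
  next
    assume dd: "c1 + \<bar>c2\<bar> < 0"
    obtain i0 where i0: "i0 \<in> {0..3::nat}" "fst z \<le> f1 g u (3/4) ((real i0 + snd z) / 4)"
      using zY unfolding memY by blast
    have "((\<lambda>t. (X t - X 0) / t + \<bar>(T t - T 0) / t\<bar>) \<longlongrightarrow> c1 + \<bar>c2\<bar>) (at_right 0)"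
      by (intro tendsto_intros qX qT)
    then have "eventually (\<lambda>t. (X t - X 0) / t + \<bar>(T t - T 0) / t\<bar> < 0) (at_right 0)"
      using dd by (rule order_tendstoD(2))
    then show ?thesis using tpos
    proof eventually_elim
      case (elim t)
      have tp: "0 < t" using elim(2) .
      have q: "(X t - X 0) / t + \<bar>(T t - T 0) / t\<bar> < 0" using elim(1) .
      have "(X t - X 0) + \<bar>T t - T 0\<bar> = t * ((X t - X 0) / t + \<bar>(T t - T 0) / t\<bar>)"
        using tp by (simp add: distrib_left abs_divide)
      also have "\<dots> < 0" by (rule mult_pos_neg[OF tp q])
      finally have A: "(X t - X 0) + \<bar>T t - T 0\<bar> < 0" .
      have "\<bar>f1 g u (3/4) ((real i0 + T t) / 4) - f1 g u (3/4) ((real i0 + snd z) / 4)\<bar> \<le> \<bar>(real i0 + T t) / 4 - (real i0 + snd z) / 4\<bar>"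
        by (rule g_lip[OF st g])
      also have "(real i0 + T t) / 4 - (real i0 + snd z) / 4 = (T t - T 0) / 4"
        using T0 by (simp add: field_simps)
      also have "\<bar>(T t - T 0) / 4\<bar> \<le> \<bar>T t - T 0\<bar>" by simp
      finally have "X t \<le> f1 g u (3/4) ((real i0 + T t) / 4)" using A i0(2) X0 by linarith
      then show ?case using i0(1) by blast
    qed
  qed
  show ?thesis using E1 E2
  proof eventually_elim
    case (elim t)
    then obtain i where i: "i \<in> {0..3::nat}" "X t \<le> f1 g u (3/4) ((real i + T t) / 4)" by blast
    have "X t \<le> 1" using i(2) f1_le1[OF st, of "(real i + T t) / 4"] by linarith
    have A: "3/4 \<le> fst (X t, T t)" using elim(1) by simp
    have B: "fst (X t, T t) \<le> 1" using \<open>X t \<le> 1\<close> by simp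
    have C: "fst (X t, T t) \<le> f1 g u (3/4) ((real i + snd (X t, T t)) / 4)" using i(2) by simp
    show ?case unfolding memY using A B C i(1) by blast
  qed
qed

lemma Lopen:
  assumes st: "standing g 1 u" and g: "g > 0" and zY: "z \<notin> Yset g u"
  shows "eventually (\<lambda>q. q \<notin> Yset g u) (nhds z)"
proof -
  have z34: "fst z \<noteq> 3/4" using Y_34[OF st] zY by blast
  consider "fst z < 3/4" | "fst z > 1" | "3/4 < fst z" "fst z \<le> 1" using z34 by linarith
  then show ?thesis
  proof cases
    case 1
    have "eventually (\<lambda>q. q \<in> {q::real\<times>real. fst q < 3/4}) (nhds z)"
      by (rule eventually_nhds_in_open[OF oL]) (use 1 in simp)
    then show ?thesis by eventually_elim (simp add: memY)
  next
    case 2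
    have o1: "open {q::real\<times>real. 1 < fst q}" by (rule open_Collect_less) (intro continuous_intros)+
    have "eventually (\<lambda>q. q \<in> {q::real\<times>real. 1 < fst q}) (nhds z)"
      by (rule eventually_nhds_in_open[OF o1]) (use 2 in simp)
    then show ?thesis by eventually_elim (simp add: memY)
  next
    case 3
    have gi: "\<forall>i\<in>{0..3::nat}. fst z > f1 g u (3/4) ((real i + snd z) / 4)"
    proof (rule ccontr)
      assume "\<not> (\<forall>i\<in>{0..3::nat}. fst z > f1 g u (3/4) ((real i + snd z) / 4))"
      then obtain i where "i \<in> {0..3::nat}" "fst z \<le> f1 g u (3/4) ((real i + snd z) / 4)" by force
      then have "z \<in> Yset g u" unfolding memY using 3 by auto
      with zY show False by simp
    qed
    have ev: "eventually (\<lambda>q. fst q > f1 g u (3/4) ((real i + snd q) / 4)) (nhds z)" if i: "i \<in> {0..3::nat}" for i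
    proof -
      have c: "isCont (\<lambda>q::real\<times>real. fst q - f1 g u (3/4) ((real i + snd q) / 4)) z"
      proof -
        have "isCont (\<lambda>q::real\<times>real. (real i + snd q) / 4) z" by (intro continuous_intros) simp
        then have "isCont (\<lambda>q::real\<times>real. f1 g u (3/4) ((real i + snd q) / 4)) z"
          using continuous_at_compose[of z "\<lambda>q::real\<times>real. (real i + snd q) / 4" "f1 g u (3/4)"] g_cont[OF st g]
          by (simp add: o_def)
        then show ?thesis by (intro continuous_intros)
      qed
      define h where "h = (\<lambda>q::real\<times>real. fst q - f1 g u (3/4) ((real i + snd q) / 4))"
      have "(h \<longlongrightarrow> h z) (nhds z)" using c unfolding h_def[symmetric] isCont_def tendsto_at_iff_tendsto_nhds .
      then have "((\<lambda>q::real\<times>real. fst q - f1 g u (3/4) ((real i + snd q) / 4)) \<longlongrightarrow> fst z - f1 g u (3/4) ((real i + snd z) / 4)) (nhds z)"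
        unfolding h_def by simp
      moreover have "fst z - f1 g u (3/4) ((real i + snd z) / 4) > 0" using gi i by simp
      ultimately have "eventually (\<lambda>q. fst q - f1 g u (3/4) ((real i + snd q) / 4) > 0) (nhds z)"
        by (rule order_tendstoD(1))
      then show ?thesis by eventually_elim simp
    qed
    have "eventually (\<lambda>q. \<forall>i\<in>{0..3::nat}. fst q > f1 g u (3/4) ((real i + snd q) / 4)) (nhds z)"
      by (rule eventually_ball_finite) (use ev in auto)
    then show ?thesis
    proof eventually_elim
      case (elim q)
      show ?case
      proof
        assume "q \<in> Yset g u"
        then obtain i where "i \<in> {0..3::nat}" "fst q \<le> f1 g u (3/4) ((real i + snd q) / 4)" unfolding memY by blast
        with elim show False by fastforce
      qed
    qed
  qed
qed

lemma ray:
  assumes st: "standing g 1 u" and g: "g > 0"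
    and pY: "p \<in> Yset g u"
    and rt: "ret_time g u p = n" and n: "0 < n"
    and nY: "\<And>k. 0 < k \<Longrightarrow> k < n \<Longrightarrow> (fmap g u ^^ k) p \<notin> Yset g u"
    and cont: "\<And>k. 0 < k \<Longrightarrow> k < n \<Longrightarrow> isCont (fmap g u ^^ k) p"
    and G: "((fmap g u ^^ n) has_derivative M) (at p)"
    and D: "(Fmap g u has_derivative D) (at p within Yset g u)"
    and evp: "eventually (\<lambda>t. p + t *\<^sub>R w \<in> Yset g u) (at_right 0)"
    and evy: "eventually (\<lambda>t. (fmap g u ^^ n) (p + t *\<^sub>R w) \<in> Yset g u) (at_right 0)"
  shows "D w = M w"
proof -
  define r where "r = (\<lambda>t::real. p + t *\<^sub>R w)"
  have ev_k: "eventually (\<lambda>t. (fmap g u ^^ k) (r t) \<notin> Yset g u) (at_right 0)" if k: "k \<in> {0<..<n}" for k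
  proof -
    have "(r \<longlongrightarrow> p) (at_right 0)" unfolding r_def by (auto intro!: tendsto_eq_intros)
    moreover have ck: "isCont (fmap g u ^^ k) p" using cont k by auto
    ultimately have "((\<lambda>t. (fmap g u ^^ k) (r t)) \<longlongrightarrow> (fmap g u ^^ k) p) (at_right 0)"
      using isCont_tendsto_compose by blast
    moreover have "eventually (\<lambda>q. q \<notin> Yset g u) (nhds ((fmap g u ^^ k) p))"
      by (rule Lopen[OF st g nY]) (use k in auto)
    ultimately show ?thesis unfolding filterlim_iff by blast
  qed
  have "eventually (\<lambda>t. \<forall>k\<in>{0<..<n}. (fmap g u ^^ k) (r t) \<notin> Yset g u) (at_right 0)"
    by (rule eventually_ball_finite) (use ev_k in auto)
  then have "eventually (\<lambda>t. r t \<in> Yset g u \<and> Fmap g u (r t) = (fmap g u ^^ n) (r t)) (at_right 0)"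
    using evp evy
  proof eventually_elim
    case (elim t)
    have e3: "r t \<in> Yset g u" "(fmap g u ^^ n) (r t) \<in> Yset g u" using elim(2,3) unfolding r_def by simp_all
    have "ret_time g u (r t) = n" unfolding ret_time_def
    proof (rule Least_equality)
      show "0 < n \<and> (fmap g u ^^ n) (r t) \<in> Yset g u" using n e3 by simp
      fix m assume m: "0 < m \<and> (fmap g u ^^ m) (r t) \<in> Yset g u"
      show "n \<le> m"
      proof (rule ccontr)
        assume "\<not> n \<le> m"
        then have "m \<in> {0<..<n}" using m by simp
        then show False using elim(1) m by blast
      qed
    qed
    then show ?case using e3 unfolding Fmap_def by simp
  qed
  then obtain b where b: "b > 0" "\<And>t. t > 0 \<Longrightarrow> t < b \<Longrightarrow> r t \<in> Yset g u \<and> Fmap g u (r t) = (fmap g u ^^ n) (r t)"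
    unfolding eventually_at_right_field by auto
  define I where "I = {0..b/2}"
  have r0: "r 0 = p" unfolding r_def by simp
  have Fp: "Fmap g u p = (fmap g u ^^ n) p" unfolding Fmap_def rt ..
  have eqI: "Fmap g u (r t) = (fmap g u ^^ n) (r t)" if t: "t \<in> I" for t
  proof (cases "t = 0")
    case True then show ?thesis using r0 Fp by simp
  next
    case False then show ?thesis using b t unfolding I_def by auto
  qed
  have rI: "r ` I \<subseteq> Yset g u"
  proof
    fix q assume "q \<in> r ` I"
    then obtain t where t: "t \<in> I" "q = r t" by blast
    show "q \<in> Yset g u"
    proof (cases "t = 0")
      case True then show ?thesis using r0 pY t by simp
    next
      case False then show ?thesis using b t unfolding I_def by auto
    qed
  qed
  have dr: "(r has_derivative (\<lambda>h. h *\<^sub>R w)) (at 0 within I)"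
    unfolding r_def by (auto intro!: derivative_eq_intros)
  have DI: "(Fmap g u has_derivative D) (at (r 0) within r ` I)"
    using has_derivative_subset[OF D rI] r0 by simp
  have d1: "((\<lambda>t. Fmap g u (r t)) has_derivative (\<lambda>h. D (h *\<^sub>R w))) (at 0 within I)"
    by (rule has_derivative_in_compose[OF dr DI])
  have GI: "((fmap g u ^^ n) has_derivative M) (at (r 0))" using G r0 by simp
  have d2: "((\<lambda>t. (fmap g u ^^ n) (r t)) has_derivative (\<lambda>h. M (h *\<^sub>R w))) (at 0 within I)"
    by (rule has_derivative_compose[OF dr GI])
  have I0: "0 \<in> I" unfolding I_def using b by simp
  have d3: "((\<lambda>t. Fmap g u (r t)) has_derivative (\<lambda>h. M (h *\<^sub>R w))) (at 0 within I)"
    by (rule has_derivative_transform[OF I0 _ d2]) (rule eqI)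
  have lD: "linear D" by (rule has_derivative_linear[OF D])
  have lM: "linear M" by (rule has_derivative_linear[OF G])
  have eD: "(\<lambda>h. D (h *\<^sub>R w)) = (\<lambda>h. h *\<^sub>R D w)" using linear_scale[OF lD] by auto
  have eM: "(\<lambda>h. M (h *\<^sub>R w)) = (\<lambda>h. h *\<^sub>R M w)" using linear_scale[OF lM] by auto
  have v1: "((\<lambda>t. Fmap g u (r t)) has_vector_derivative D w) (at 0 within I)"
    unfolding has_vector_derivative_def using d1 eD by simp
  have v2: "((\<lambda>t. Fmap g u (r t)) has_vector_derivative M w) (at 0 within I)"
    unfolding has_vector_derivative_def using d3 eM by simp
  have nb: "at (0::real) within I \<noteq> bot"
    unfolding I_def using at_within_Icc_at_right[of 0 "b/2"] b by simp
  show ?thesis by (rule vector_derivative_unique_within[OF nb v1 v2])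
qed

lemma hi_orbit:
  assumes st: "standing g e u" and f1: "fst (fmap g u p) > 3/4"
    and nY: "\<And>k. 0 < k \<Longrightarrow> k < n \<Longrightarrow> (fmap g u ^^ k) p \<notin> Yset g u"
  shows "1 \<le> k \<Longrightarrow> k \<le> n \<Longrightarrow> fst ((fmap g u ^^ k) p) > 3/4"
proof (induction k)
  case 0 then show ?case by simp
next
  case (Suc k)
  show ?case
  proof (cases "k = 0")
    case True then show ?thesis using f1 by simp
  next
    case False
    have h: "fst ((fmap g u ^^ k) p) > 3/4" using Suc False by simp
    have "(fmap g u ^^ k) p \<notin> Yset g u" using nY[of k] False Suc.prems by simp
    then have "fst (fmap g u ((fmap g u ^^ k) p)) > 3/4" by (rule inv_hi[OF st h])
    then show ?thesis by simp
  qed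
qed

lemma path_deriv:
  assumes G: "(G has_derivative M) (at p)"
  shows "((\<lambda>t. fst (G (p + t *\<^sub>R w))) has_real_derivative fst (M w)) (at 0)"
    and "((\<lambda>t. snd (G (p + t *\<^sub>R w))) has_real_derivative snd (M w)) (at 0)"
proof -
  have dr: "((\<lambda>t::real. p + t *\<^sub>R w) has_derivative (\<lambda>h. h *\<^sub>R w)) (at 0)"
    by (auto intro!: derivative_eq_intros)
  have G0: "(G has_derivative M) (at (p + 0 *\<^sub>R w))" using G by simp
  have d: "((\<lambda>t. G (p + t *\<^sub>R w)) has_derivative (\<lambda>h. M (h *\<^sub>R w))) (at 0)"
    by (rule has_derivative_compose[OF dr G0])
  have lM: "linear M" by (rule has_derivative_linear[OF G])
  have e: "(\<lambda>h. M (h *\<^sub>R w)) = (\<lambda>h. h *\<^sub>R M w)" using linear_scale[OF lM] by auto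
  have d': "((\<lambda>t. G (p + t *\<^sub>R w)) has_derivative (\<lambda>h. h *\<^sub>R M w)) (at 0)" using d e by simp
  have "((\<lambda>t. fst (G (p + t *\<^sub>R w))) has_derivative (\<lambda>h. fst (h *\<^sub>R M w))) (at 0)"
    by (rule has_derivative_fst[OF d'])
  moreover have "(\<lambda>h. fst (h *\<^sub>R M w)) = (*) (fst (M w))" by (auto simp: fun_eq_iff)
  ultimately show "((\<lambda>t. fst (G (p + t *\<^sub>R w))) has_real_derivative fst (M w)) (at 0)"
    unfolding has_field_derivative_def by simp
  have "((\<lambda>t. snd (G (p + t *\<^sub>R w))) has_derivative (\<lambda>h. snd (h *\<^sub>R M w))) (at 0)"
    by (rule has_derivative_snd[OF d'])
  moreover have "(\<lambda>h. snd (h *\<^sub>R M w)) = (*) (snd (M w))" by (auto simp: fun_eq_iff)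
  ultimately show "((\<lambda>t. snd (G (p + t *\<^sub>R w))) has_real_derivative snd (M w)) (at 0)"
    unfolding has_field_derivative_def by simp
qed

lemma lin2:
  assumes lD: "linear D" and lM: "linear M" and c: "(c::real) \<noteq> 0"
    and e1: "D (c, 1) = M (c, 1)" and e2: "D (c, -1) = M (c, -1)"
  shows "D (v::real \<times> real) = (M v :: real \<times> real)"
proof -
  obtain a b where v: "v = (a, b)" by (cases v)
  define x1 where "x1 = (a / c + b) / 2"
  define x2 where "x2 = (a / c - b) / 2"
  have vv: "v = x1 *\<^sub>R (c, 1) + x2 *\<^sub>R (c, -1)"
    unfolding v x1_def x2_def using c by (simp add: field_simps)
  have "D v = x1 *\<^sub>R D (c, 1) + x2 *\<^sub>R D (c, -1)"
    unfolding vv by (simp only: linear_add[OF lD] linear_scale[OF lD])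
  also have "\<dots> = x1 *\<^sub>R M (c, 1) + x2 *\<^sub>R M (c, -1)" using e1 e2 by simp
  also have "\<dots> = M v"
    unfolding vv by (simp only: linear_add[OF lM] linear_scale[OF lM])
  finally show ?thesis .
qed

lemma tri_lin: "linear (tri a b k)"
  by (rule linearI) (auto simp: tri_def algebra_simps)

lemma ret_props:
  assumes ex: "\<exists>n>0. (fmap g u ^^ n) p \<in> Yset g u"
  shows "0 < ret_time g u p" "(fmap g u ^^ ret_time g u p) p \<in> Yset g u"
    "\<And>k. 0 < k \<Longrightarrow> k < ret_time g u p \<Longrightarrow> (fmap g u ^^ k) p \<notin> Yset g u"
proof -
  have "0 < ret_time g u p \<and> (fmap g u ^^ ret_time g u p) p \<in> Yset g u"
    unfolding ret_time_def by (rule LeastI_ex) (use ex in blast)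
  then show "0 < ret_time g u p" "(fmap g u ^^ ret_time g u p) p \<in> Yset g u" by auto
  fix k assume "0 < k" "k < ret_time g u p"
  then show "(fmap g u ^^ k) p \<notin> Yset g u" using not_less_Least[of k "\<lambda>n. 0 < n \<and> (fmap g u ^^ n) p \<in> Yset g u"]
    unfolding ret_time_def by blast
qed

lemma caseB:
  assumes st: "standing g 1 u" and g: "g > 0" and pY: "p \<in> Yset g u" and p3: "fst p > 3/4"
    and ex: "\<exists>n>0. (fmap g u ^^ n) p \<in> Yset g u"
    and D: "(Fmap g u has_derivative D) (at p within Yset g u)"
  shows "4 * norm v \<le> norm (D v)"
proof -
  define n where "n = ret_time g u p"
  have n0: "0 < n" and yY: "(fmap g u ^^ n) p \<in> Yset g u" using ret_props[OF ex] unfolding n_def by auto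
  have nY: "\<And>k. 0 < k \<Longrightarrow> k < n \<Longrightarrow> (fmap g u ^^ k) p \<notin> Yset g u" using ret_props(3)[OF ex] unfolding n_def by blast
  obtain al be where ab: "al > 0" "((fmap g u ^^ n) has_derivative tri al be (4 ^ n)) (at p)"
      "\<forall>v. 4 * norm v \<le> norm (tri al be (4 ^ n) v)"
    using iter_deriv[where m=n and k=n, OF st g p3 nY] n0 by auto
  have cont: "isCont (fmap g u ^^ k) p" if k: "0 < k" "k < n" for k
  proof -
    obtain a b where "((fmap g u ^^ k) has_derivative tri a b (4 ^ k)) (at p)"
      using iter_deriv[where m=n and k=k, OF st g p3 nY] k by auto
    then show ?thesis by (rule has_derivative_continuous)
  qed
  define M where "M = tri al be (4 ^ n)"
  define y where "y = (fmap g u ^^ n) p"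
  have G: "((fmap g u ^^ n) has_derivative M) (at p)" using ab(2) unfolding M_def .
  have rt: "ret_time g u p = n" unfolding n_def ..
  have dir: "D w = M w" if cp: "(fst p > 3/4 \<or> fst w > 0) \<and> (fst p \<le> 15/16 \<or> fst w + \<bar>snd w\<bar> < 0)"
    and cy: "(fst y > 3/4 \<or> fst (M w) > 0) \<and> (fst y \<le> 15/16 \<or> fst (M w) + \<bar>snd (M w)\<bar> < 0)" for w
  proof -
    have idd: "(id has_derivative id) (at p)" by (simp add: has_derivative_id)
    have evp0: "eventually (\<lambda>t. (fst (id (p + t *\<^sub>R w)), snd (id (p + t *\<^sub>R w))) \<in> Yset g u) (at_right 0)"
      by (rule inY_ev[OF st g pY path_deriv[OF idd]]) (use cp in auto)
    have evp: "eventually (\<lambda>t. p + t *\<^sub>R w \<in> Yset g u) (at_right 0)" using evp0 by (simp only: id_apply prod.collapse)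
    have evy0: "eventually (\<lambda>t. (fst ((fmap g u ^^ n) (p + t *\<^sub>R w)), snd ((fmap g u ^^ n) (p + t *\<^sub>R w))) \<in> Yset g u) (at_right 0)"
      by (rule inY_ev[OF st g yY path_deriv[OF G]]) (use cy y_def in auto)
    have evy: "eventually (\<lambda>t. (fmap g u ^^ n) (p + t *\<^sub>R w) \<in> Yset g u) (at_right 0)" using evy0 by (simp only: prod.collapse)
    show ?thesis by (rule ray[OF st g pY rt n0 nY cont G D evp evy]) auto
  qed
  have y34: "fst y \<ge> 3/4" using yY unfolding y_def memY by simp
  have DM: "D v = M v" for v
  proof (cases "fst y = 3/4")
    case True
    have p15: "fst p \<le> 15/16"
    proof (rule ccontr)
      assume "\<not> fst p \<le> 15/16"
      then have "fst (fmap g u p) > 3/4" using fmap_hi[OF p3] by simp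
      then have "fst ((fmap g u ^^ n) p) > 3/4" using hi_orbit[OF st _ nY, of n] n0 by simp
      then show False using True y_def by simp
    qed
    define s where "s = (\<bar>be\<bar> + 1) / al"
    have s0: "s > 0" unfolding s_def using ab(1) by simp
    have als: "al * s = \<bar>be\<bar> + 1" unfolding s_def using ab(1) by simp
    have e1: "D (s, 1) = M (s, 1)"
    proof (rule dir)
      show "(fst p > 3/4 \<or> fst (s, 1::real) > 0) \<and> (fst p \<le> 15/16 \<or> fst (s, 1::real) + \<bar>snd (s, 1::real)\<bar> < 0)"
        using p3 p15 by simp
      have "fst (M (s, 1)) = al * s + be" unfolding M_def tri_def by simp
      then have "fst (M (s, 1)) > 0" using als by linarith
      then show "(fst y > 3/4 \<or> fst (M (s, 1)) > 0) \<and> (fst y \<le> 15/16 \<or> fst (M (s, 1)) + \<bar>snd (M (s, 1))\<bar> < 0)"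
        using True by simp
    qed
    have e2: "D (s, -1) = M (s, -1)"
    proof (rule dir)
      show "(fst p > 3/4 \<or> fst (s, -1::real) > 0) \<and> (fst p \<le> 15/16 \<or> fst (s, -1::real) + \<bar>snd (s, -1::real)\<bar> < 0)"
        using p3 p15 by simp
      have "fst (M (s, -1)) = al * s - be" unfolding M_def tri_def by simp
      then have "fst (M (s, -1)) > 0" using als by linarith
      then show "(fst y > 3/4 \<or> fst (M (s, -1)) > 0) \<and> (fst y \<le> 15/16 \<or> fst (M (s, -1)) + \<bar>snd (M (s, -1))\<bar> < 0)"
        using True by simp
    qed
    show ?thesis by (rule lin2[OF has_derivative_linear[OF D] tri_lin[of al be "4 ^ n", folded M_def] _ e1 e2]) (use s0 in simp)
  next
    case False
    then have y3: "fst y > 3/4" using y34 by simp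
    define s where "s = (\<bar>be\<bar> + 4 ^ n + 1) / al + 1"
    have "(0::real) < \<bar>be\<bar> + 4 ^ n + 1" by (simp add: add_nonneg_pos add_pos_nonneg)
    then have "0 < (\<bar>be\<bar> + 4 ^ n + 1) / al" using ab(1) by simp
    then have s1: "s > 1" unfolding s_def by simp
    have als: "al * s = \<bar>be\<bar> + 4 ^ n + 1 + al" unfolding s_def using ab(1) by (simp add: field_simps)
    have e1: "D (-s, 1) = M (-s, 1)"
    proof (rule dir)
      show "(fst p > 3/4 \<or> fst (-s, 1::real) > 0) \<and> (fst p \<le> 15/16 \<or> fst (-s, 1::real) + \<bar>snd (-s, 1::real)\<bar> < 0)"
        using p3 s1 by simp
      have "fst (M (-s, 1)) = - (al * s) + be" "snd (M (-s, 1)) = 4 ^ n" unfolding M_def tri_def by simp_all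
      then have "fst (M (-s, 1)) + \<bar>snd (M (-s, 1))\<bar> < 0" using als ab(1) by simp
      then show "(fst y > 3/4 \<or> fst (M (-s, 1)) > 0) \<and> (fst y \<le> 15/16 \<or> fst (M (-s, 1)) + \<bar>snd (M (-s, 1))\<bar> < 0)"
        using y3 by simp
    qed
    have e2: "D (-s, -1) = M (-s, -1)"
    proof (rule dir)
      show "(fst p > 3/4 \<or> fst (-s, -1::real) > 0) \<and> (fst p \<le> 15/16 \<or> fst (-s, -1::real) + \<bar>snd (-s, -1::real)\<bar> < 0)"
        using p3 s1 by simp
      have "fst (M (-s, -1)) = - (al * s) - be" "snd (M (-s, -1)) = - (4 ^ n)" unfolding M_def tri_def by simp_all
      then have "fst (M (-s, -1)) + \<bar>snd (M (-s, -1))\<bar> < 0" using als ab(1) by simp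
      then show "(fst y > 3/4 \<or> fst (M (-s, -1)) > 0) \<and> (fst y \<le> 15/16 \<or> fst (M (-s, -1)) + \<bar>snd (M (-s, -1))\<bar> < 0)"
        using y3 by simp
    qed
    show ?thesis by (rule lin2[OF has_derivative_linear[OF D] tri_lin[of al be "4 ^ n", folded M_def] _ e1 e2]) (use s1 in simp)
  qed
  show ?thesis using ab(3) DM unfolding M_def by metis
qed

fun bseq :: "real \<Rightarrow> (real \<times> real \<Rightarrow> real) \<Rightarrow> real \<Rightarrow> nat \<Rightarrow> real \<Rightarrow> real" where
  "bseq g u th 0 t = 4 * t"
| "bseq g u th (Suc k) t = min (bseq g u th k t) (3/4) * (1 + min (bseq g u th k t) (3/4) powr g * u (min (bseq g u th k t) (3/4), 4 ^ Suc k * th))"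

lemma bseq_nonneg: "standing g e u \<Longrightarrow> 0 \<le> t \<Longrightarrow> 0 \<le> bseq g u th k t"
proof (induction k)
  case 0 then show ?case by simp
next
  case (Suc k)
  define x where "x = min (bseq g u th k t) (3/4)"
  have x: "0 \<le> x" "x \<le> 3/4" using Suc unfolding x_def by auto
  have "0 < u (x, 4 ^ Suc k * th)" using st_pos[OF Suc.prems(1) x] .
  then have "0 \<le> x * (1 + x powr g * u (x, 4 ^ Suc k * th))" using x by (simp add: add_nonneg_nonneg)
  then show ?case unfolding x_def by simp
qed

lemma bseq_zero: "bseq g u th k 0 = 0"
  by (induction k) auto

lemma bseq_cont: assumes st: "standing g e u" and g: "g > 0" shows "continuous_on {0..} (bseq g u th k)"
proof (induction k)
  case 0
  have "bseq g u th 0 = (\<lambda>t. 4 * t)" by (rule ext) simp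
  then show ?case by (simp only: continuous_on_mult[OF continuous_on_const continuous_on_id])
next
  case (Suc k)
  define x where "x = (\<lambda>t. min (bseq g u th k t) (3/4))"
  have cx: "continuous_on {0..} x" unfolding x_def by (rule continuous_on_min[OF Suc.IH continuous_on_const])
  have xr: "0 \<le> x t \<and> x t \<le> 3/4" if "t \<in> {0..}" for t
  proof -
    have "0 \<le> bseq g u th k t" using bseq_nonneg[OF st, of t] that by simp
    then show ?thesis unfolding x_def by simp
  qed
  have cp: "continuous_on {0..} (\<lambda>t. (x t, 4 ^ Suc k * th))" by (rule continuous_on_Pair[OF cx continuous_on_const])
  have im: "(\<lambda>t. (x t, 4 ^ Suc k * th)) ` {0..} \<subseteq> SS"
  proof (rule image_subsetI)
    fix t :: real assume "t \<in> {0..}"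
    then show "(x t, 4 ^ Suc k * th) \<in> SS" using xr[of t] unfolding SS_def by simp
  qed
  have cu: "continuous_on {0..} (\<lambda>t. u (x t, 4 ^ Suc k * th))"
    by (rule continuous_on_compose2[OF st_cont[OF st] cp im])
  have cpow: "continuous_on {0..} (\<lambda>t. x t powr g)"
    by (rule continuous_on_powr'[OF cx continuous_on_const]) (use xr g in auto)
  have "continuous_on {0..} (\<lambda>t. x t * (1 + x t powr g * u (x t, 4 ^ Suc k * th)))"
    by (rule continuous_on_mult[OF cx continuous_on_add[OF continuous_on_const continuous_on_mult[OF cpow cu]]])
  moreover have "bseq g u th (Suc k) = (\<lambda>t. x t * (1 + x t powr g * u (x t, 4 ^ Suc k * th)))"
    by (rule ext) (simp only: x_def bseq.simps)
  ultimately show ?case by (simp only:)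
qed

lemma u_period_nat: "standing g e u \<Longrightarrow> u (x, t + real n) = u (x, t)"
proof (induction n)
  case 0 then show ?case by simp
next
  case (Suc n)
  have "u (x, t + real (Suc n)) = u (x, (t + real n) + 1)" by (simp add: add_ac)
  also have "\<dots> = u (x, t + real n)" by (rule st_period[OF Suc.prems])
  finally show ?case using Suc by simp
qed

lemma u_frac: assumes st: "standing g e u" shows "u (x, t) = u (x, frac t)"
proof (cases "\<lfloor>t\<rfloor> \<ge> 0")
  case True
  have "t = frac t + real (nat \<lfloor>t\<rfloor>)" using True by (simp add: frac_def)
  then have "u (x, t) = u (x, frac t + real (nat \<lfloor>t\<rfloor>))" by simp
  also have "\<dots> = u (x, frac t)" by (rule u_period_nat[OF st])
  finally show ?thesis .
next
  case False
  have "frac t = t + real (nat (- \<lfloor>t\<rfloor>))" using False by (simp add: frac_def)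
  then have "u (x, frac t) = u (x, t + real (nat (- \<lfloor>t\<rfloor>)))" by simp
  also have "\<dots> = u (x, t)" by (rule u_period_nat[OF st])
  finally show ?thesis by simp
qed

lemma u_lower: assumes st: "standing g e u"
  shows "\<exists>m>0. \<forall>x t. 0 \<le> x \<longrightarrow> x \<le> 3/4 \<longrightarrow> m \<le> u (x, t)"
proof -
  define K where "K = {0..3/4::real} \<times> {0..1::real}"
  have cK: "compact K" unfolding K_def by (intro compact_Times compact_Icc)
  have nK: "K \<noteq> {}" unfolding K_def by simp
  have KS: "K \<subseteq> SS" unfolding K_def SS_def by auto
  have cu: "continuous_on K u" by (rule continuous_on_subset[OF st_cont[OF st] KS])
  obtain q where q: "q \<in> K" "\<And>y. y \<in> K \<Longrightarrow> u q \<le> u y"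
    using continuous_attains_inf[OF cK nK cu] by blast
  have "u q > 0" using q(1) st_pos[OF st, of "fst q" "snd q"] unfolding K_def by (cases q) auto
  moreover have "u q \<le> u (x, t)" if "0 \<le> x" "x \<le> 3/4" for x t
  proof -
    have "(x, frac t) \<in> K" unfolding K_def using that frac_ge_0[of t] frac_lt_1[of t] by auto
    then have "u q \<le> u (x, frac t)" by (rule q(2))
    then show ?thesis using u_frac[OF st, of x t] by simp
  qed
  ultimately show ?thesis by blast
qed

lemma bseq_grow:
  assumes st: "standing g e u" and g: "g > 0" and t: "t > 0"
  shows "\<exists>K. 3/4 \<le> bseq g u th K t"
proof (rule ccontr)
  assume "\<not> (\<exists>K. 3/4 \<le> bseq g u th K t)"
  then have lt: "\<And>j. bseq g u th j t < 3/4" by (meson not_le)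
  obtain m where m: "m > 0" "\<And>x t. 0 \<le> x \<Longrightarrow> x \<le> 3/4 \<Longrightarrow> m \<le> u (x, t)" using u_lower[OF st] by blast
  define x0 where "x0 = 4 * t"
  have x0: "x0 > 0" unfolding x0_def using t by simp
  define c where "c = x0 * (x0 powr g * m)"
  have c: "c > 0" unfolding c_def using x0 m by simp
  have grow: "bseq g u th j t \<ge> x0 + real j * c" for j
  proof (induction j)
    case 0 then show ?case unfolding x0_def by simp
  next
    case (Suc j)
    define b where "b = bseq g u th j t"
    have jc: "real j * c \<ge> 0" using c by simp
    have b: "b < 3/4" "b \<ge> x0" using lt[of j] Suc.IH jc unfolding b_def by linarith+
    have mb: "min b (3/4) = b" using b by simp
    have u1: "m \<le> u (b, 4 ^ Suc j * th)" using m(2)[of b] b x0 by simp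
    have p1: "x0 powr g \<le> b powr g" using b x0 g by (intro powr_mono2) auto
    have "x0 * (x0 powr g * m) \<le> b * (b powr g * u (b, 4 ^ Suc j * th))"
      using b x0 p1 u1 m(1) by (intro mult_mono) auto
    then have "bseq g u th (Suc j) t \<ge> b + c" unfolding c_def by (simp add: mb b_def[symmetric] algebra_simps)
    moreover have "x0 + real (Suc j) * c = (x0 + real j * c) + c" by (simp add: algebra_simps)
    ultimately show ?case using Suc.IH unfolding b_def by linarith
  qed
  obtain j where "3/4 < real j * c" using ex_less_of_nat_mult[OF c] by blast
  then have "bseq g u th j t > 3/4" using grow[of j] x0 by linarith
  with lt[of j] show False by simp
qed

lemma bseq_orbit:
  assumes t: "t > 0"
  shows "j \<le> J \<Longrightarrow> (\<forall>i<J. bseq g u th i t < 3/4) \<Longrightarrow> (fmap g u ^^ Suc j) (3/4 + t, th) = (bseq g u th j t, 4 ^ Suc j * th)"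
proof (induction j)
  case 0
  have "fmap g u (3/4 + t, th) = (4 * t, 4 * th)" using fmap_hi[of "(3/4 + t, th)"] t by simp
  then show ?case by simp
next
  case (Suc j)
  have IH: "(fmap g u ^^ Suc j) (3/4 + t, th) = (bseq g u th j t, 4 ^ Suc j * th)" using Suc by simp
  have lt: "bseq g u th j t < 3/4" using Suc.prems by simp
  have "(fmap g u ^^ Suc (Suc j)) (3/4 + t, th) = fmap g u (bseq g u th j t, 4 ^ Suc j * th)" using IH by simp
  also have "\<dots> = gbranch g u (bseq g u th j t, 4 ^ Suc j * th)" using fmap_lo lt by simp
  also have "\<dots> = (bseq g u th (Suc j) t, 4 ^ Suc (Suc j) * th)" unfolding gbranch_def using lt by simp
  finally show ?case .
qed

lemma caseA:
  assumes st: "standing g 1 u" and g: "g > 0" and pY: "p \<in> Yset g u" and p3: "fst p = 3/4"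
    and ex: "\<exists>n>0. (fmap g u ^^ n) p \<in> Yset g u"
    and cF: "continuous (at p within Yset g u) (Fmap g u)"
  shows False
proof -
  define n where "n = ret_time g u p"
  have n0: "0 < n" and yY: "(fmap g u ^^ n) p \<in> Yset g u" using ret_props[OF ex] unfolding n_def by auto
  have nY: "\<And>k. 0 < k \<Longrightarrow> k < n \<Longrightarrow> (fmap g u ^^ k) p \<notin> Yset g u" using ret_props(3)[OF ex] unfolding n_def by blast
  define th where "th = snd p"
  have pe: "p = (3/4, th)" unfolding th_def using p3 by (cases p) simp
  have fp: "fst (fmap g u p) = f1 g u (3/4) th" unfolding fmap_def pe by simp
  have "fst (fmap g u p) > 3/4" unfolding fp using st_15[OF st, of th] by simp
  then have Fp3: "fst (Fmap g u p) > 3/4"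
    using hi_orbit[OF st _ nY, of n] n0 unfolding Fmap_def n_def[symmetric] by simp
  define e where "e = fst (Fmap g u p) - 3/4"
  have e0: "e > 0" unfolding e_def using Fp3 by simp
  obtain d where d: "d > 0" "\<And>q. q \<in> Yset g u \<Longrightarrow> dist q p < d \<Longrightarrow> dist (Fmap g u q) (Fmap g u p) < e"
    using cF e0 unfolding continuous_within_eps_delta by metis
  define t1 where "t1 = min (d/2) (3/32)"
  have t1: "t1 > 0" "t1 < d" "t1 \<le> 3/32" unfolding t1_def using d by auto
  obtain K where K: "3/4 \<le> bseq g u th K t1" using bseq_grow[OF st g t1(1)] by blast
  define TT where "TT = (\<Union>j\<in>{..K}. {0..t1} \<inter> bseq g u th j -` {3/4..})"
  have cTT: "closed TT" unfolding TT_def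
  proof (intro closed_UN ballI)
    fix j assume "j \<in> {..K}"
    have "continuous_on {0..t1} (bseq g u th j)" by (rule continuous_on_subset[OF bseq_cont[OF st g]]) auto
    then show "closed ({0..t1} \<inter> bseq g u th j -` {3/4..})"
      by (rule continuous_closed_preimage) auto
  qed simp
  have t1T: "t1 \<in> TT" unfolding TT_def using K t1 by auto
  have bTT: "bdd_below TT" unfolding TT_def by (rule bdd_belowI[of _ 0]) auto
  define s where "s = Inf TT"
  have sT: "s \<in> TT" unfolding s_def by (rule closed_contains_Inf[OF _ bTT cTT]) (use t1T in auto)
  have sle: "\<And>y. y \<in> TT \<Longrightarrow> s \<le> y" unfolding s_def by (rule cInf_lower[OF _ bTT])
  obtain j0 where j0: "j0 \<le> K" "0 \<le> s" "s \<le> t1" "3/4 \<le> bseq g u th j0 s" using sT unfolding TT_def by auto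
  have s0: "s > 0"
  proof (rule ccontr)
    assume "\<not> s > 0"
    then have "s = 0" using j0 by simp
    then show False using j0(4) bseq_zero[of g u th j0] by simp
  qed
  have all_le: "bseq g u th j s \<le> 3/4" if j: "j \<le> K" for j
  proof (rule ccontr)
    assume "\<not> bseq g u th j s \<le> 3/4"
    then have gt: "bseq g u th j s > 3/4" by simp
    have "continuous (at s) (bseq g u th j)"
      by (rule continuous_on_interior[OF bseq_cont[OF st g]]) (use s0 in simp)
    then have "(bseq g u th j \<longlongrightarrow> bseq g u th j s) (at s)" by (simp add: isCont_def)
    then have "(bseq g u th j \<longlongrightarrow> bseq g u th j s) (at_left s)"
      by (rule tendsto_mono[OF at_le, rotated]) simp
    then have "eventually (\<lambda>y. 3/4 < bseq g u th j y) (at_left s)" using gt by (rule order_tendstoD(1))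
    then obtain b where b: "b < s" "\<And>y. b < y \<Longrightarrow> y < s \<Longrightarrow> 3/4 < bseq g u th j y"
      unfolding eventually_at_left_field by blast
    define y where "y = (max b 0 + s) / 2"
    have y: "b < y" "y < s" "0 \<le> y" unfolding y_def using b(1) s0 by auto
    have "3/4 \<le> bseq g u th j y" using b(2)[of y] y by simp
    then have "y \<in> {0..t1} \<inter> bseq g u th j -` {3/4..}" using y j0(3) by simp
    then have "y \<in> TT" unfolding TT_def using j by blast
    then have "s \<le> y" by (rule sle)
    with y show False by simp
  qed
  define J where "J = (LEAST j. 3/4 \<le> bseq g u th j s)"
  have J1: "3/4 \<le> bseq g u th J s" unfolding J_def by (rule LeastI[of _ j0]) (rule j0(4))
  have "J \<le> j0" unfolding J_def by (rule Least_le) (rule j0(4))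
  then have JK: "J \<le> K" using j0(1) by simp
  have Jeq: "bseq g u th J s = 3/4" using J1 all_le[OF JK] by simp
  have Jlt: "\<forall>i<J. bseq g u th i s < 3/4"
  proof (intro allI impI)
    fix i assume "i < J"
    then have "\<not> 3/4 \<le> bseq g u th i s" unfolding J_def by (rule not_less_Least)
    then show "bseq g u th i s < 3/4" by simp
  qed
  define q where "q = (3/4 + s, th)"
  have orb: "\<And>j. j \<le> J \<Longrightarrow> (fmap g u ^^ Suc j) q = (bseq g u th j s, 4 ^ Suc j * th)"
    unfolding q_def using bseq_orbit[OF s0] Jlt by blast
  have qY: "q \<in> Yset g u"
  proof -
    have "3/4 + s \<le> f1 g u (3/4) ((real 0 + th) / 4)" using st_15[OF st, of "(real 0 + th) / 4"] j0(3) t1(3) by simp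
    moreover have "3/4 + s \<le> 1" using j0(3) t1(3) by simp
    ultimately show ?thesis unfolding memY q_def using s0
      by (intro conjI bexI[of _ 0]) simp_all
  qed
  have rq: "ret_time g u q = Suc J" unfolding ret_time_def
  proof (rule Least_equality)
    have "(fmap g u ^^ Suc J) q \<in> Yset g u" using orb[of J] Jeq Y_34[OF st] by simp
    then show "0 < Suc J \<and> (fmap g u ^^ Suc J) q \<in> Yset g u" by simp
    fix m assume m: "0 < m \<and> (fmap g u ^^ m) q \<in> Yset g u"
    show "Suc J \<le> m"
    proof (rule ccontr)
      assume "\<not> Suc J \<le> m"
      then obtain j where mj: "m = Suc j" "j < J" using m by (cases m) auto
      then have "(fmap g u ^^ m) q = (bseq g u th j s, 4 ^ Suc j * th)" using orb[of j] by simp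
      moreover have "bseq g u th j s < 3/4" using Jlt mj by simp
      ultimately have "(fmap g u ^^ m) q \<notin> Yset g u" unfolding memY by simp
      with m show False by simp
    qed
  qed
  have Fq: "fst (Fmap g u q) = 3/4" unfolding Fmap_def rq using orb[of J] Jeq by simp
  have "dist q p = s" unfolding q_def pe using s0 by (simp add: dist_Pair_Pair dist_real_def)
  then have "dist q p < d" using j0(3) t1(2) by simp
  then have "dist (Fmap g u q) (Fmap g u p) < e" using d(2) qY by blast
  moreover have "dist (fst (Fmap g u q)) (fst (Fmap g u p)) \<le> dist (Fmap g u q) (Fmap g u p)" by (rule dist_fst_le)
  moreover have "dist (fst (Fmap g u q)) (fst (Fmap g u p)) = e" unfolding Fq e_def dist_real_def using Fp3 by simp
  ultimately show False by simp
qed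

theorem proposition2p1:
  fixes \<gamma> :: real
  assumes "\<gamma> > 0"
  shows "\<exists>\<epsilon>>0. \<forall>u. standing \<gamma> \<epsilon> u \<longrightarrow>
           (\<forall>p\<in>Yset \<gamma> u. (\<exists>n>0. (fmap \<gamma> u ^^ n) p \<in> Yset \<gamma> u) \<longrightarrow>
              (\<forall>D. (Fmap \<gamma> u has_derivative D) (at p within Yset \<gamma> u) \<longrightarrow>
                   (\<forall>v. 4 * norm v \<le> norm (D v))))"
proof (rule exI[of _ 1], intro conjI allI impI ballI)
  show "(0::real) < 1" by simp
  fix u p D v
  assume st: "standing \<gamma> 1 u" and pY: "p \<in> Yset \<gamma> u"
    and ex: "\<exists>n>0. (fmap \<gamma> u ^^ n) p \<in> Yset \<gamma> u"
    and Dd: "(Fmap \<gamma> u has_derivative D) (at p within Yset \<gamma> u)"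
  have p34: "fst p \<ge> 3/4" using pY unfolding memY by simp
  show "4 * norm v \<le> norm (D v)"
  proof (cases "fst p = 3/4")
    case True
    have "continuous (at p within Yset \<gamma> u) (Fmap \<gamma> u)" by (rule has_derivative_continuous[OF Dd])
    then have False by (rule caseA[OF st assms pY True ex])
    then show ?thesis ..
  next
    case False
    then have "fst p > 3/4" using p34 by simp
    then show ?thesis by (rule caseB[OF st assms pY _ ex Dd])
  qed
qed

end
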